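(* Every voting rule in the EJR-Exact family satisfies EJR: for every ballot profile $\mathcal{A}$ over $C$, every $k\le|C|$, and every choice of the subprocedures Alg1, Alg2, Alg3 (and every resolution of their choices), the output committee $W$ provides EJR for $(\mathcal{A},k)$.
   Context: Setting: voters $N=\{1,\dots,n\}$, candidates $C=\{c_1,\dots,c_m\}$, approval ballots $A_i\subseteq C$, $\mathcal{A}=(A_1,\dots,A_n)$, $k$ a positive integer with $k\le|C|$, $q=n/k$, $N_c=\{i: c\in A_i\}$, $n_c=|N_c|$. Convention: $\max\emptyset=0$. EJR: for $\ell\in\{1,\dots,k\}$, $N^*\subseteq N$ is $\ell$-cohesive if $|N^*|\ge\ell n/k$ and $|\bigcap_{i\in N^*}A_i|\ge\ell$. A committee $W$, $|W|=k$, provides EJR if for every $\ell$ and every $\ell$-cohesive $N^*$ some $i\in N^*$ has $|A_i\cap W|\ge\ell$. Dissatisfaction level: for $W\subseteq C$ with $|W|\le k$ and $c\in C\setminus W$, $\ell(c,W)$ is the largest nonnegative integer $\ell$ with $\ell=\lfloor \frac{k}{n}|\{i\in N: c\in A_i,\ |A_i\cap W|<\ell\}|\rfloor$. Along a run with current sets $W_j$, write $\ell_j(c)=\ell(c,W_j)$, and for $c\in C\setminus W_j$, $i\in N_c$: $\ell_j(i,c)=\max_{c'\in A_i\setminus(W_j\cup\{c\})}\ell_j(c')$, and $g_i^j(c)=0$ if $\ell_j(i,c)\le|A_i\cap W_j|$, $g_i^j(c)=\frac{\ell_j(i,c)-|A_i\cap W_j|-1}{\ell_j(i,c)}$ otherwise.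 EJR-Exact family (parametrized by arbitrary subprocedures Alg1, Alg2, Alg3): set $W_0=\emptyset$, $f_i^0=1$ for all $i$. For $j=1,\dots,k$: for each $c\in C\setminus W_{j-1}$ compute $x_c=\sum_{i\in N_c}(f_i^{j-1}-g_i^{j-1}(c))$. If some $c$ has $x_c\ge q$ (Stage 1, "normal iteration"): Alg1 selects any such $w_j$; set $f_i^j=f_i^{j-1}$ for $i\notin N_{w_j}$; Alg2 chooses values $f_i^j$ for $i\in N_{w_j}$ with $0\le f_i^j\le f_i^{j-1}$, $\sum_{i\in N_{w_j}}(f_i^{j-1}-f_i^j)=q$, and $f_i^j\ge g_i^{j-1}(w_j)$ for every $i\in N_{w_j}$ with $\ell_{j-1}(i,w_j)>|A_i\cap W_{j-1}|$; set $W_j=W_{j-1}\cup\{w_j\}$. Otherwise stop the loop. Finally, if fewer than $k$ candidates have been selected (Stage 2), Alg3 adds arbitrary further candidates from $C$ not yet selected until $k$ are selected. The output $W$ is the set of all selected candidates. *)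

theory Defs
  imports Main Complex_Main
begin

definition supporters :: "'v set \<Rightarrow> ('v \<Rightarrow> 'c set) \<Rightarrow> 'c \<Rightarrow> 'v set" where
  "supporters N A c = {i \<in> N. c \<in> A i}"

definition cohesive :: "'v set \<Rightarrow> ('v \<Rightarrow> 'c set) \<Rightarrow> nat \<Rightarrow> nat \<Rightarrow> 'v set \<Rightarrow> bool" where
  "cohesive N A k l S \<longleftrightarrow> S \<subseteq> N \<and>
     real (card S) \<ge> real l * real (card N) / real k \<and>
     card (\<Inter>i\<in>S. A i) \<ge> l"

definition provides_EJR :: "'v set \<Rightarrow> ('v \<Rightarrow> 'c set) \<Rightarrow> nat \<Rightarrow> 'c set \<Rightarrow> bool" where
  "provides_EJR N A k W \<longleftrightarrow> card W = k \<and>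
     (\<forall>l \<in> {1..k}. \<forall>S. cohesive N A k l S \<longrightarrow> (\<exists>i\<in>S. card (A i \<inter> W) \<ge> l))"

definition dlevel :: "'v set \<Rightarrow> ('v \<Rightarrow> 'c set) \<Rightarrow> nat \<Rightarrow> 'c \<Rightarrow> 'c set \<Rightarrow> nat" where
  "dlevel N A k c W = Max {l::nat. int l =
      \<lfloor>real k / real (card N) * real (card {i \<in> N. c \<in> A i \<and> card (A i \<inter> W) < l})\<rfloor>}"

definition vlevel :: "'v set \<Rightarrow> ('v \<Rightarrow> 'c set) \<Rightarrow> nat \<Rightarrow> 'c set \<Rightarrow> 'v \<Rightarrow> 'c \<Rightarrow> nat" where
  "vlevel N A k W i c =
     (if A i - (W \<union> {c}) = {} then 0
      else Max ((\<lambda>c'. dlevel N A k c' W) ` (A i - (W \<union> {c}))))"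

definition gval :: "'v set \<Rightarrow> ('v \<Rightarrow> 'c set) \<Rightarrow> nat \<Rightarrow> 'c set \<Rightarrow> 'v \<Rightarrow> 'c \<Rightarrow> real" where
  "gval N A k W i c =
     (let L = vlevel N A k W i c; s = card (A i \<inter> W) in
      if L \<le> s then 0 else (real L - real s - 1) / real L)"

definition xval :: "'v set \<Rightarrow> ('v \<Rightarrow> 'c set) \<Rightarrow> nat \<Rightarrow> 'c set \<Rightarrow> ('v \<Rightarrow> real) \<Rightarrow> 'c \<Rightarrow> real" where
  "xval N A k W f c = (\<Sum>i\<in>supporters N A c. f i - gval N A k W i c)"

text \<open>A complete run of some member of the EJR-Exact family (any Alg1, Alg2, Alg3,
  any resolution of their choices).  ws = [w_1,...,w_t] are the candidates chosen in
  the normal iterations, f j is the budget vector f^j, W is the final output.\<close>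
definition EJR_Exact_run ::
  "'v set \<Rightarrow> 'c set \<Rightarrow> ('v \<Rightarrow> 'c set) \<Rightarrow> nat \<Rightarrow> 'c list \<Rightarrow> (nat \<Rightarrow> 'v \<Rightarrow> real) \<Rightarrow> 'c set \<Rightarrow> bool" where
  "EJR_Exact_run N C A k ws f W \<longleftrightarrow>
     (let q = real (card N) / real k; t = length ws; Ws = (\<lambda>j. set (take j ws)) in
      t \<le> k \<and>
      (\<forall>i\<in>N. f 0 i = 1) \<and>
      (\<forall>j<t. let w = ws ! j in
         w \<in> C - Ws j \<and>
         xval N A k (Ws j) (f j) w \<ge> q \<and>
         (\<forall>i\<in>N - supporters N A w. f (Suc j) i = f j i) \<and>
         (\<forall>i\<in>supporters N A w. 0 \<le> f (Suc j) i \<and> f (Suc j) i \<le> f j i) \<and>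
         (\<Sum>i\<in>supporters N A w. f j i - f (Suc j) i) = q \<and>
         (\<forall>i\<in>supporters N A w. vlevel N A k (Ws j) i w > card (A i \<inter> Ws j) \<longrightarrow>
              f (Suc j) i \<ge> gval N A k (Ws j) i w)) \<and>
      (t < k \<longrightarrow> (\<forall>c\<in>C - Ws t. xval N A k (Ws t) (f t) c < q)) \<and>
      set ws \<subseteq> W \<and> W \<subseteq> C \<and> card W = k)"

end

theory Submission
  imports Defs
begin

lemma cnt_le:
  assumes "finite N"
  shows "card {i \<in> N. c \<in> A i \<and> card (A i \<inter> W) < l} \<le> card N"
  using assms by (intro card_mono) auto

lemma dlevel_set:
  fixes N :: "'v set" and k :: nat and c :: 'c and A :: "'v \<Rightarrow> 'c set" and W :: "'c set"
  assumes fin: "finite N" and ne: "N \<noteq> {}" and k: "0 < k"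
  defines "D \<equiv> {l::nat. int l =
      \<lfloor>real k / real (card N) * real (card {i \<in> N. c \<in> A i \<and> card (A i \<inter> W) < l})\<rfloor>}"
  shows "finite D" "dlevel N A k c W \<in> D" "\<And>l. l \<in> D \<Longrightarrow> l \<le> dlevel N A k c W"
proof -
  have n: "real (card N) > 0" using fin ne by (simp add: card_gt_0_iff)
  have sub: "D \<subseteq> {..k}"
  proof
    fix l assume "l \<in> D"
    then have e0: "int l = \<lfloor>real k / real (card N) * real (card {i \<in> N. c \<in> A i \<and> card (A i \<inter> W) < l})\<rfloor>"
      unfolding D_def by simp
    have e: "real l = real_of_int \<lfloor>real k / real (card N) * real (card {i \<in> N. c \<in> A i \<and> card (A i \<inter> W) < l})\<rfloor>"
      unfolding e0[symmetric] by simp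
    have "real_of_int \<lfloor>real k / real (card N) * real (card {i \<in> N. c \<in> A i \<and> card (A i \<inter> W) < l})\<rfloor>
        \<le> real k / real (card N) * real (card {i \<in> N. c \<in> A i \<and> card (A i \<inter> W) < l})" by (rule of_int_floor_le)
    also have "\<dots> \<le> real k / real (card N) * real (card N)"
      using cnt_le[OF fin] by (intro mult_left_mono) auto
    also have "\<dots> = real k" using n by simp
    finally show "l \<in> {..k}" using e by simp
  qed
  then show fD: "finite D" using finite_subset by blast
  have "0 \<in> D" unfolding D_def by simp
  then have "D \<noteq> {}" by auto
  have eq: "dlevel N A k c W = Max D" unfolding dlevel_def D_def by simp
  show "dlevel N A k c W \<in> D" using eq Max_in[OF fD] \<open>D \<noteq> {}\<close> by simp
  show "\<And>l. l \<in> D \<Longrightarrow> l \<le> dlevel N A k c W" using eq Max_ge[OF fD] by simp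
qed

lemma dlevel_prop:
  assumes fin: "finite N" and ne: "N \<noteq> {}" and k: "0 < k"
  shows "real (dlevel N A k c W) * real (card N) \<le> real k * real (card {i \<in> N. c \<in> A i \<and> card (A i \<inter> W) < dlevel N A k c W})"
proof -
  have n: "real (card N) > 0" using fin ne by (simp add: card_gt_0_iff)
  define L where "L = dlevel N A k c W"
  have "int L = \<lfloor>real k / real (card N) * real (card {i \<in> N. c \<in> A i \<and> card (A i \<inter> W) < L})\<rfloor>"
    using dlevel_set(2)[OF fin ne k, where c=c and A=A and W=W] unfolding L_def by simp
  then have "real_of_int (int L) \<le> real k / real (card N) * real (card {i \<in> N. c \<in> A i \<and> card (A i \<inter> W) < L})"
    by (simp only: of_int_floor_le)
  then have "real L \<le> real k / real (card N) * real (card {i \<in> N. c \<in> A i \<and> card (A i \<inter> W) < L})"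
    by simp
  then have "real L * real (card N) \<le> real k * real (card {i \<in> N. c \<in> A i \<and> card (A i \<inter> W) < L})"
    using n by (simp add: field_simps)
  then show ?thesis unfolding L_def .
qed

lemma dlevel_ge:
  assumes fin: "finite N" and ne: "N \<noteq> {}" and k: "0 < k"
    and h: "real l * real (card N) \<le> real k * real (card {i \<in> N. c \<in> A i \<and> card (A i \<inter> W) < l})"
  shows "l \<le> dlevel N A k c W"
proof -
  have n: "real (card N) > 0" using fin ne by (simp add: card_gt_0_iff)
  define cnt where "cnt = (\<lambda>l. card {i \<in> N. c \<in> A i \<and> card (A i \<inter> W) < l})"
  have cmono: "cnt a \<le> cnt b" if "a \<le> b" for a b
    unfolding cnt_def using fin that by (intro card_mono) auto
  have cle: "cnt a \<le> card N" for a unfolding cnt_def by (rule cnt_le[OF fin])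
  define P where "P = {m. m \<le> k \<and> real m * real (card N) \<le> real k * real (cnt m)}"
  have bnd: "m \<le> k" if "real m * real (card N) \<le> real k * real (cnt m)" for m
  proof -
    have "real k * real (cnt m) \<le> real k * real (card N)" using cle[of m] by (intro mult_left_mono) auto
    then have "real m * real (card N) \<le> real k * real (card N)" using that by linarith
    then show ?thesis using n by simp
  qed
  have lP: "l \<in> P" unfolding P_def using h bnd unfolding cnt_def by auto
  have fP: "finite P" unfolding P_def by auto
  define m where "m = Max P"
  have mP: "m \<in> P" unfolding m_def using Max_in[OF fP] lP by auto
  have lm: "l \<le> m" unfolding m_def using Max_ge[OF fP lP] .
  have mmax: "m' \<le> m" if "m' \<in> P" for m' unfolding m_def using Max_ge[OF fP that] .
  have m1: "real m \<le> real k / real (card N) * real (cnt m)"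
    using mP n unfolding P_def by (simp add: field_simps)
  then have fl: "int m \<le> \<lfloor>real k / real (card N) * real (cnt m)\<rfloor>"
    by (simp add: le_floor_iff)
  have "int m = \<lfloor>real k / real (card N) * real (cnt m)\<rfloor>"
  proof (rule ccontr)
    assume "int m \<noteq> \<lfloor>real k / real (card N) * real (cnt m)\<rfloor>"
    with fl have lt: "int m < \<lfloor>real k / real (card N) * real (cnt m)\<rfloor>" by simp
    define m' where "m' = nat \<lfloor>real k / real (card N) * real (cnt m)\<rfloor>"
    have mm': "m < m'" using lt unfolding m'_def by linarith
    have "real m' \<le> real k / real (card N) * real (cnt m)"
    proof -
      have "0 \<le> \<lfloor>real k / real (card N) * real (cnt m)\<rfloor>" using lt by linarith
      then have "real m' = real_of_int \<lfloor>real k / real (card N) * real (cnt m)\<rfloor>"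
        unfolding m'_def by simp
      then show ?thesis by (simp add: of_int_floor_le)
    qed
    also have "\<dots> \<le> real k / real (card N) * real (cnt m')"
      using cmono[of m m'] mm' by (intro mult_left_mono) auto
    finally have "real m' * real (card N) \<le> real k * real (cnt m')" using n by (simp add: field_simps)
    then have "m' \<in> P" unfolding P_def using bnd by auto
    then show False using mmax mm' by fastforce
  qed
  then have "m \<le> dlevel N A k c W"
    using dlevel_set(3)[OF fin ne k, where l=m and c=c and A=A and W=W] unfolding cnt_def by simp
  then show ?thesis using lm by simp
qed

lemma dlevel_mono:
  assumes fin: "finite N" and ne: "N \<noteq> {}" and k: "0 < k" and fW: "finite W'" and sub: "W \<subseteq> W'"
  shows "dlevel N A k c W' \<le> dlevel N A k c W"
proof -
  define L where "L = dlevel N A k c W'"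
  have "card {i \<in> N. c \<in> A i \<and> card (A i \<inter> W') < L} \<le> card {i \<in> N. c \<in> A i \<and> card (A i \<inter> W) < L}"
  proof (rule card_mono)
    show "finite {i \<in> N. c \<in> A i \<and> card (A i \<inter> W) < L}" using fin by auto
    show "{i \<in> N. c \<in> A i \<and> card (A i \<inter> W') < L} \<subseteq> {i \<in> N. c \<in> A i \<and> card (A i \<inter> W) < L}"
    proof
      fix i assume "i \<in> {i \<in> N. c \<in> A i \<and> card (A i \<inter> W') < L}"
      moreover have "card (A i \<inter> W) \<le> card (A i \<inter> W')" using fW sub by (intro card_mono) auto
      ultimately show "i \<in> {i \<in> N. c \<in> A i \<and> card (A i \<inter> W) < L}" by auto
    qed
  qed
  then have "real L * real (card N) \<le> real k * real (card {i \<in> N. c \<in> A i \<and> card (A i \<inter> W) < L})"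
    using dlevel_prop[OF fin ne k, of A c W'] unfolding L_def[symmetric]
    by (smt (verit) mult_left_mono of_nat_0_le_iff of_nat_mono)
  then have "L \<le> dlevel N A k c W" by (rule dlevel_ge[OF fin ne k])
  then show ?thesis unfolding L_def .
qed


lemma gval_nonneg: "0 \<le> gval N A k W i c"
  unfolding gval_def Let_def by auto

lemma vlevel_ge:
  assumes "finite (A i)" "c' \<in> A i - (W \<union> {c})"
  shows "dlevel N A k c' W \<le> vlevel N A k W i c"
proof -
  have "A i - (W \<union> {c}) \<noteq> {}" using assms by auto
  then show ?thesis unfolding vlevel_def using assms by (auto intro!: Max_ge)
qed

theorem mainTheorem7:
  fixes N :: "'v set" and C :: "'c set" and A :: "'v \<Rightarrow> 'c set" and k :: nat
    and ws :: "'c list" and f :: "nat \<Rightarrow> 'v \<Rightarrow> real" and W :: "'c set"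
  assumes "finite N" and "N \<noteq> {}" and "finite C"
    and "\<forall>i\<in>N. A i \<subseteq> C"
    and "0 < k" and "k \<le> card C"
    and "EJR_Exact_run N C A k ws f W"
  shows "provides_EJR N A k W"
proof -
  note fin = assms(1) and ne = assms(2) and fC = assms(3) and AC = assms(4) and kpos = assms(5)
  define q where "q = real (card N) / real k"
  define t where "t = length ws"
  define Ws where "Ws = (\<lambda>j. set (take j ws))"
  have run: "t \<le> k \<and> (\<forall>i\<in>N. f 0 i = 1) \<and>
     (\<forall>j<t. ws ! j \<in> C - Ws j \<and>
         xval N A k (Ws j) (f j) (ws!j) \<ge> q \<and>
         (\<forall>i\<in>N - supporters N A (ws!j). f (Suc j) i = f j i) \<and>
         (\<forall>i\<in>supporters N A (ws!j). 0 \<le> f (Suc j) i \<and> f (Suc j) i \<le> f j i) \<and>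
         (\<Sum>i\<in>supporters N A (ws!j). f j i - f (Suc j) i) = q \<and>
         (\<forall>i\<in>supporters N A (ws!j). vlevel N A k (Ws j) i (ws!j) > card (A i \<inter> Ws j) \<longrightarrow>
              f (Suc j) i \<ge> gval N A k (Ws j) i (ws!j))) \<and>
      (t < k \<longrightarrow> (\<forall>c\<in>C - Ws t. xval N A k (Ws t) (f t) c < q)) \<and>
      set ws \<subseteq> W \<and> W \<subseteq> C \<and> card W = k"
    using assms(7) unfolding EJR_Exact_run_def Let_def q_def t_def Ws_def by assumption
  have tk: "t \<le> k" using run by blast
  have f0: "\<forall>i\<in>N. f 0 i = 1" using run by blast
  have step: "\<forall>j<t. ws ! j \<in> C - Ws j \<and>
         (\<forall>i\<in>N - supporters N A (ws!j). f (Suc j) i = f j i) \<and>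
         (\<forall>i\<in>supporters N A (ws!j). 0 \<le> f (Suc j) i \<and> f (Suc j) i \<le> f j i) \<and>
         (\<Sum>i\<in>supporters N A (ws!j). f j i - f (Suc j) i) = q \<and>
         (\<forall>i\<in>supporters N A (ws!j). vlevel N A k (Ws j) i (ws!j) > card (A i \<inter> Ws j) \<longrightarrow>
              f (Suc j) i \<ge> gval N A k (Ws j) i (ws!j))" using run by blast
  have stop: "t < k \<longrightarrow> (\<forall>c\<in>C - Ws t. xval N A k (Ws t) (f t) c < q)" using run by blast
  have wsW: "set ws \<subseteq> W" and WC: "W \<subseteq> C" and cardW: "card W = k" using run by blast+
  have finWs: "finite (Ws j)" for j unfolding Ws_def by simp
  have Wst: "Ws t = set ws" unfolding Ws_def t_def by simp
  have WsSuc: "Ws (Suc j) = insert (ws ! j) (Ws j)" if "j < t" for j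
    unfolding Ws_def using that unfolding t_def by (simp add: take_Suc_conv_app_nth)
  have finA: "finite (A i)" if "i \<in> N" for i using AC that fC finite_subset by blast
  have npos: "real (card N) > 0" using fin ne by (simp add: card_gt_0_iff)
  have qpos: "q > 0" unfolding q_def using npos kpos by simp
  have kq: "real k * q = real (card N)" unfolding q_def using kpos by simp
  have supp: "supporters N A c = {i \<in> N. c \<in> A i}" for c unfolding supporters_def by simp

  have inv: "\<forall>i\<in>N. 0 \<le> f j i \<and> (\<forall>c\<in>A i - Ws j. card (A i \<inter> Ws j) < dlevel N A k c (Ws j) \<longrightarrow>
        1 - real (card (A i \<inter> Ws j)) / real (dlevel N A k c (Ws j)) \<le> f j i)" if "j \<le> t" for j
    using that
  proof (induction j)
    case 0
    show ?case
    proof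
      fix i assume "i \<in> N"
      then have "f 0 i = 1" using f0 by blast
      then show "0 \<le> f 0 i \<and> (\<forall>c\<in>A i - Ws 0. card (A i \<inter> Ws 0) < dlevel N A k c (Ws 0) \<longrightarrow>
        1 - real (card (A i \<inter> Ws 0)) / real (dlevel N A k c (Ws 0)) \<le> f 0 i)"
        by simp
    qed
  next
    case (Suc j)
    then have jt: "j < t" by simp
    have IH: "\<forall>i\<in>N. 0 \<le> f j i \<and> (\<forall>c\<in>A i - Ws j. card (A i \<inter> Ws j) < dlevel N A k c (Ws j) \<longrightarrow>
        1 - real (card (A i \<inter> Ws j)) / real (dlevel N A k c (Ws j)) \<le> f j i)"
      using Suc by simp
    define w where "w = ws ! j"
    have WS: "Ws (Suc j) = insert w (Ws j)" using WsSuc[OF jt] unfolding w_def .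
    have st: "w \<in> C - Ws j \<and>
         (\<forall>i\<in>N - supporters N A w. f (Suc j) i = f j i) \<and>
         (\<forall>i\<in>supporters N A w. 0 \<le> f (Suc j) i \<and> f (Suc j) i \<le> f j i) \<and>
         (\<forall>i\<in>supporters N A w. vlevel N A k (Ws j) i w > card (A i \<inter> Ws j) \<longrightarrow>
              f (Suc j) i \<ge> gval N A k (Ws j) i w)" using step jt unfolding w_def by blast
    have wnot: "w \<notin> Ws j" using st by blast
    have lmono: "dlevel N A k c (Ws (Suc j)) \<le> dlevel N A k c (Ws j)" for c
      by (rule dlevel_mono[OF fin ne kpos finWs]) (auto simp: WS)
    show ?case
    proof
      fix i assume iN: "i \<in> N"
      define s where "s = card (A i \<inter> Ws j)"
      have IHi: "0 \<le> f j i" "\<And>c. c \<in> A i - Ws j \<Longrightarrow> s < dlevel N A k c (Ws j) \<Longrightarrow>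
        1 - real s / real (dlevel N A k c (Ws j)) \<le> f j i" using IH iN unfolding s_def by auto
      show "0 \<le> f (Suc j) i \<and> (\<forall>c\<in>A i - Ws (Suc j). card (A i \<inter> Ws (Suc j)) < dlevel N A k c (Ws (Suc j)) \<longrightarrow>
        1 - real (card (A i \<inter> Ws (Suc j))) / real (dlevel N A k c (Ws (Suc j))) \<le> f (Suc j) i)"
      proof (cases "w \<in> A i")
        case False
        then have fi: "f (Suc j) i = f j i" using st iN unfolding supporters_def by auto
        have sc: "card (A i \<inter> Ws (Suc j)) = s" unfolding s_def WS using False by auto
        show ?thesis
        proof (intro conjI ballI impI)
          show "0 \<le> f (Suc j) i" using fi IHi by simp
          fix c assume c: "c \<in> A i - Ws (Suc j)" and lt: "card (A i \<inter> Ws (Suc j)) < dlevel N A k c (Ws (Suc j))"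
          define L' where "L' = dlevel N A k c (Ws (Suc j))"
          define L where "L = dlevel N A k c (Ws j)"
          have LL: "L' \<le> L" unfolding L'_def L_def by (rule lmono)
          have sL': "s < L'" using lt sc unfolding L'_def by simp
          have c2: "c \<in> A i - Ws j" using c WS by auto
          have "1 - real s / real L \<le> f j i" using IHi(2)[OF c2] sL' LL unfolding L_def by simp
          moreover have "real s / real L \<le> real s / real L'"
            using LL sL' by (intro divide_left_mono) auto
          ultimately show "1 - real (card (A i \<inter> Ws (Suc j))) / real (dlevel N A k c (Ws (Suc j))) \<le> f (Suc j) i"
            using sc fi unfolding L'_def by simp
        qed
      next
        case True
        then have isupp: "i \<in> supporters N A w" using iN unfolding supporters_def by auto
        have sc: "card (A i \<inter> Ws (Suc j)) = s + 1"
        proof -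
          have "A i \<inter> Ws (Suc j) = insert w (A i \<inter> Ws j)" unfolding WS using True by auto
          then show ?thesis unfolding s_def using wnot finWs by simp
        qed
        show ?thesis
        proof (intro conjI ballI impI)
          show "0 \<le> f (Suc j) i" using st isupp by blast
          fix c assume c: "c \<in> A i - Ws (Suc j)" and lt: "card (A i \<inter> Ws (Suc j)) < dlevel N A k c (Ws (Suc j))"
          define L' where "L' = dlevel N A k c (Ws (Suc j))"
          define M where "M = vlevel N A k (Ws j) i w"
          have c2: "c \<in> A i - (Ws j \<union> {w})" using c WS by auto
          have "L' \<le> dlevel N A k c (Ws j)" unfolding L'_def by (rule lmono)
          also have "\<dots> \<le> M" unfolding M_def by (rule vlevel_ge[where A=A and i=i, OF finA[OF iN] c2])
          finally have LM: "L' \<le> M" .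
          have sL': "s + 1 < L'" using lt sc unfolding L'_def by simp
          have "gval N A k (Ws j) i w \<le> f (Suc j) i" using st isupp LM sL' unfolding M_def s_def by auto
          moreover have "gval N A k (Ws j) i w = (real M - real s - 1) / real M"
            unfolding gval_def Let_def M_def[symmetric] s_def[symmetric] using LM sL' by simp
          moreover have "real (s+1) / real M \<le> real (s+1) / real L'"
            using LM sL' by (intro divide_left_mono) auto
          moreover have "(real M - real s - 1) / real M = 1 - real (s+1) / real M"
            using LM sL' by (simp add: field_simps)
          ultimately show "1 - real (card (A i \<inter> Ws (Suc j))) / real (dlevel N A k c (Ws (Suc j))) \<le> f (Suc j) i"
            using sc unfolding L'_def by simp
        qed
      qed
    qed
  qed
  have sumf: "(\<Sum>i\<in>N. f j i) = real (card N) - real j * q" if "j \<le> t" for j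
    using that
  proof (induction j)
    case 0
    then show ?case using f0 by simp
  next
    case (Suc j)
    then have jt: "j < t" by simp
    define w where "w = ws ! j"
    have st: "(\<forall>i\<in>N - supporters N A w. f (Suc j) i = f j i) \<and>
         (\<Sum>i\<in>supporters N A w. f j i - f (Suc j) i) = q" using step jt unfolding w_def by blast
    have "(\<Sum>i\<in>N. f j i - f (Suc j) i) = (\<Sum>i\<in>supporters N A w. f j i - f (Suc j) i)"
      by (rule sum.mono_neutral_right) (use fin st in \<open>auto simp: supporters_def\<close>)
    then have "(\<Sum>i\<in>N. f j i) - (\<Sum>i\<in>N. f (Suc j) i) = q" using st by (simp add: sum_subtractf)
    then show ?case using Suc jt by (simp add: algebra_simps)
  qed
  define Wt where "Wt = Ws t"
  have invt: "\<forall>i\<in>N. 0 \<le> f t i \<and> (\<forall>c\<in>A i - Wt. card (A i \<inter> Wt) < dlevel N A k c Wt \<longrightarrow>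
        1 - real (card (A i \<inter> Wt)) / real (dlevel N A k c Wt) \<le> f t i)"
    using inv[of t] unfolding Wt_def by simp
  have WtW: "Wt \<subseteq> W" unfolding Wt_def Wst using wsW .
  have finWt: "finite Wt" unfolding Wt_def by (rule finWs)
  have key: "q \<le> xval N A k Wt (f t) cs"
    if cs: "cs \<in> C - Wt" and cmax: "\<forall>c\<in>C - Wt. dlevel N A k c Wt \<le> dlevel N A k cs Wt"
      and L1: "1 \<le> dlevel N A k cs Wt" for cs
  proof -
    define L where "L = dlevel N A k cs Wt"
    define T where "T = {i \<in> N. cs \<in> A i \<and> card (A i \<inter> Wt) < L}"
    define tm where "tm = (\<lambda>i. f t i - gval N A k Wt i cs)"
    have LT: "real L * real (card N) \<le> real k * real (card T)"
      unfolding L_def T_def by (rule dlevel_prop[OF fin ne kpos])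
    have Lpos: "real L > 0" using L1 unfolding L_def by simp
    have tmi: "0 \<le> tm i \<and> (card (A i \<inter> Wt) < L \<longrightarrow> 1 / real L \<le> tm i)"
      if iS: "i \<in> supporters N A cs" for i
    proof -
      have iN: "i \<in> N" and csA: "cs \<in> A i" using iS unfolding supporters_def by auto
      define s where "s = card (A i \<inter> Wt)"
      define M where "M = vlevel N A k Wt i cs"
      have fnn: "0 \<le> f t i" using invt iN by blast
      have finv: "\<And>c. c \<in> A i - Wt \<Longrightarrow> s < dlevel N A k c Wt \<Longrightarrow>
          1 - real s / real (dlevel N A k c Wt) \<le> f t i" using invt iN unfolding s_def by blast
      show ?thesis
      proof (cases "M \<le> s")
        case True
        then have g0: "gval N A k Wt i cs = 0" unfolding gval_def Let_def M_def s_def by simp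
        show ?thesis
        proof (intro conjI impI)
          show "0 \<le> tm i" unfolding tm_def g0 using fnn by simp
          assume "card (A i \<inter> Wt) < L"
          then have sL: "s < L" unfolding s_def .
          have "1 - real s / real L \<le> f t i" using finv[of cs] csA cs sL unfolding L_def by auto
          moreover have "1 / real L \<le> 1 - real s / real L"
            using sL Lpos by (simp add: field_simps)
          ultimately show "1 / real L \<le> tm i" unfolding tm_def g0 by simp
        qed
      next
        case False
        then have ne2: "A i - (Wt \<union> {cs}) \<noteq> {}" unfolding M_def vlevel_def by auto
        then have "M \<in> (\<lambda>c'. dlevel N A k c' Wt) ` (A i - (Wt \<union> {cs}))"
          unfolding M_def vlevel_def using finA[OF iN] by (simp add: Max_in)
        then obtain c' where c': "c' \<in> A i - (Wt \<union> {cs})" and Mc: "M = dlevel N A k c' Wt" by blast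
        have c'C: "c' \<in> C - Wt" using c' AC iN by auto
        have MLe: "M \<le> L" unfolding Mc L_def using cmax c'C by blast
        have sM: "s < M" using False by simp
        have fM: "1 - real s / real M \<le> f t i" using finv[of c'] c' sM Mc by auto
        have g: "gval N A k Wt i cs = (real M - real s - 1) / real M"
          unfolding gval_def Let_def M_def[symmetric] s_def[symmetric] using False by simp
        have Mpos: "real M > 0" using sM by simp
        have "1 / real M \<le> tm i"
          unfolding tm_def g using fM Mpos by (simp add: field_simps)
        moreover have "1 / real L \<le> 1 / real M" using MLe Mpos by (simp add: frac_le)
        moreover have "0 \<le> 1 / real M" using Mpos by simp
        ultimately show ?thesis by linarith
      qed
    qed
    have finS: "finite (supporters N A cs)" using fin unfolding supporters_def by simp
    have TS: "T \<subseteq> supporters N A cs" unfolding T_def supporters_def by auto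
    have "(\<Sum>i\<in>T. 1 / real L) \<le> (\<Sum>i\<in>T. tm i)"
      by (rule sum_mono) (use tmi TS in \<open>auto simp: T_def\<close>)
    also have "\<dots> \<le> (\<Sum>i\<in>supporters N A cs. tm i)"
      by (rule sum_mono2[OF finS TS]) (use tmi in auto)
    also have "\<dots> = xval N A k Wt (f t) cs" unfolding xval_def tm_def ..
    finally have "real (card T) / real L \<le> xval N A k Wt (f t) cs" by simp
    moreover have "q \<le> real (card T) / real L"
      unfolding q_def using LT Lpos kpos by (simp add: field_simps)
    ultimately show ?thesis by linarith
  qed
  show ?thesis
    unfolding provides_EJR_def
  proof (intro conjI ballI allI impI)
    show "card W = k" by (rule cardW)
    fix l S assume l: "l \<in> {1..k}" and coh: "cohesive N A k l S"
    show "\<exists>i\<in>S. l \<le> card (A i \<inter> W)"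
    proof (rule ccontr)
      assume "\<not> (\<exists>i\<in>S. l \<le> card (A i \<inter> W))"
      then have lt: "\<forall>i\<in>S. card (A i \<inter> W) < l" by auto
      have SN: "S \<subseteq> N" and cS: "real l * real (card N) / real k \<le> real (card S)"
        and cI: "l \<le> card (\<Inter>i\<in>S. A i)" using coh unfolding cohesive_def by auto
      have "real l * real (card N) / real k > 0" using l npos kpos by simp
      then have "card S > 0" using cS by linarith
      then obtain i0 where i0: "i0 \<in> S" by (metis card_gt_0_iff ex_in_conv)
      define I where "I = (\<Inter>i\<in>S. A i)"
      have II0: "I \<subseteq> A i0" unfolding I_def using i0 by auto
      have finI: "finite I" using II0 finA[of i0] i0 SN finite_subset by blast
      have finW: "finite W" using WC fC finite_subset by blast
      have "card (I \<inter> W) \<le> card (A i0 \<inter> W)" using II0 finW by (intro card_mono) auto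
      then have "card (I \<inter> W) < card I" using lt i0 cI unfolding I_def by fastforce
      then have "\<not> I \<subseteq> W" by (metis Int_absorb2 less_irrefl)
      then obtain c where cI': "c \<in> I" and cW: "c \<notin> W" by blast
      have cC: "c \<in> C - Wt" using cI' II0 AC i0 SN WtW cW by blast
      have lev: "l \<le> dlevel N A k c Wt"
      proof (rule dlevel_ge[OF fin ne kpos])
        have "S \<subseteq> {i \<in> N. c \<in> A i \<and> card (A i \<inter> Wt) < l}"
        proof
          fix i assume iS: "i \<in> S"
          have "card (A i \<inter> Wt) \<le> card (A i \<inter> W)" using WtW finW by (intro card_mono) auto
          then show "i \<in> {i \<in> N. c \<in> A i \<and> card (A i \<inter> Wt) < l}"
            using iS SN cI' lt unfolding I_def by fastforce
        qed
        then have "card S \<le> card {i \<in> N. c \<in> A i \<and> card (A i \<inter> Wt) < l}"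
          using fin by (intro card_mono) auto
        then have "real k * real (card S) \<le> real k * real (card {i \<in> N. c \<in> A i \<and> card (A i \<inter> Wt) < l})"
          by (intro mult_left_mono) auto
        moreover have "real l * real (card N) \<le> real k * real (card S)"
          using cS kpos by (simp add: field_simps)
        ultimately show "real l * real (card N) \<le> real k * real (card {i \<in> N. c \<in> A i \<and> card (A i \<inter> Wt) < l})"
          by linarith
      qed
      have finCW: "finite (C - Wt)" using fC by simp
      have "Max ((\<lambda>c. dlevel N A k c Wt) ` (C - Wt)) \<in> (\<lambda>c. dlevel N A k c Wt) ` (C - Wt)"
        using cC finCW by (intro Max_in) auto
      then obtain cs where cs: "cs \<in> C - Wt" and csM: "dlevel N A k cs Wt = Max ((\<lambda>c. dlevel N A k c Wt) ` (C - Wt))"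
        by auto
      have cmax: "\<forall>c\<in>C - Wt. dlevel N A k c Wt \<le> dlevel N A k cs Wt"
        unfolding csM using finCW by auto
      have "dlevel N A k c Wt \<le> dlevel N A k cs Wt" using cmax cC by blast
      then have "1 \<le> dlevel N A k cs Wt" using lev l by simp
      then have xq: "q \<le> xval N A k Wt (f t) cs" using key cs cmax by blast
      show False
      proof (cases "t < k")
        case True
        then have "xval N A k Wt (f t) cs < q" using stop cs unfolding Wt_def by blast
        then show False using xq by linarith
      next
        case False
        then have tk': "t = k" using tk by simp
        have s0: "(\<Sum>i\<in>N. f t i) = 0" using sumf[of t] tk' kq by simp
        have fnn: "\<forall>i\<in>N. 0 \<le> f t i" using invt by blast
        have finS: "finite (supporters N A cs)" using fin unfolding supporters_def by simp
        have "xval N A k Wt (f t) cs \<le> (\<Sum>i\<in>supporters N A cs. f t i)"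
          unfolding xval_def by (rule sum_mono) (simp add: gval_nonneg)
        also have "\<dots> \<le> (\<Sum>i\<in>N. f t i)"
          by (rule sum_mono2[OF fin]) (use fnn in \<open>auto simp: supporters_def\<close>)
        finally show False using s0 xq qpos by linarith
      qed
    qed
  qed
qed

end
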